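(* Let $G$ be a finite Abelian group, $M\subseteq\mathbb{Z}\setminus\{0\}$ a finite set, and $S\subseteq G$ such that $G \leq M \diamond_1 S$. Let $t>0$ be an integer, and let \[S^{(t)}\triangleq\{(s,0,\dots, 0) : s \in S\} \cup \{(0,s,0,\dots,0) : s\in S\} \cup \cdots \cup\{(0,\dots,0,s) : s \in S\}\subseteq G^t.\] Then $G^{t}\leq M \diamond_t S^{(t)}$.
   Context: For a finite Abelian group $G$, a finite set $M\subseteq\mathbb{Z}\setminus\{0\}$ and $S=\{s_1,\dots,s_n\}\subseteq G$, we write $G\le M\diamond_t S$ (“$M$ completely $t$-splits $G$ with splitter set $S$”) if for every $g\in G$ there is a vector $\mathbf{e}\in(M\cup\{0\})^n$ of Hamming weight at most $t$ such that $g=\sum_i e_is_i$ (with $e_is_i$ the $e_i$-fold group multiple). *)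

theory Defs
  imports "HOL-Algebra.Product_Groups" "HOL-Algebra.FiniteProduct"
begin

text \<open>The splitter set S \<subseteq> carrier G is
  indexed by its own elements; a coefficient vector is a function e from S to
  M \<union> {0}, its Hamming weight is the number of s \<in> S with e s \<noteq> 0, and the
  combination is the group product of the integer powers s^(e s)
  (multiplicative notation for the Abelian group).\<close>
definition completely_splits ::
  "('a, 'b) monoid_scheme \<Rightarrow> int set \<Rightarrow> nat \<Rightarrow> 'a set \<Rightarrow> bool" where
  "completely_splits G M t S \<longleftrightarrow>
     (\<forall>g\<in>carrier G. \<exists>e :: 'a \<Rightarrow> int.
        (\<forall>s\<in>S. e s \<in> M \<union> {0}) \<and>
        card {s\<in>S. e s \<noteq> 0} \<le> t \<and>
        g = finprod G (\<lambda>s. s [^]\<^bsub>G\<^esub> e s) S)"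

definition power_group :: "('a, 'b) monoid_scheme \<Rightarrow> nat \<Rightarrow> (nat \<Rightarrow> 'a) monoid" where
  "power_group G t = product_group {..<t} (\<lambda>_. G)"

definition spread_set :: "('a, 'b) monoid_scheme \<Rightarrow> nat \<Rightarrow> 'a set \<Rightarrow> (nat \<Rightarrow> 'a) set" where
  "spread_set G t S = {(\<lambda>j\<in>{..<t}. if j = i then s else \<one>\<^bsub>G\<^esub>) | i s. i < t \<and> s \<in> S}"

end

theory Submission
  imports Defs
begin

lemma comm_group_product:
  assumes "comm_group G"
  shows "comm_group (product_group I (\<lambda>_. G))"
proof -
  interpret G: comm_group G by fact
  have gr: "group (product_group I (\<lambda>_. G))" by (simp add: G.is_group)
  show ?thesis
    apply (rule group.group_comm_groupI[OF gr])
    apply (auto simp: PiE_iff intro!: restrict_ext G.m_comm)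
    done
qed

lemma proj_hom:
  assumes "group G" "j \<in> I"
  shows "(\<lambda>x. x j) \<in> hom (product_group I (\<lambda>_. G)) G"
  using assms by (auto simp: hom_def PiE_iff)

lemma proj_pow:
  assumes "group G" "j \<in> I" "x \<in> carrier (product_group I (\<lambda>_. G))"
  shows "(x [^]\<^bsub>product_group I (\<lambda>_. G)\<^esub> (n::int)) j = (x j) [^]\<^bsub>G\<^esub> n"
  using hom_int_pow[OF proj_hom[OF assms(1,2)] assms(3) _ assms(1)] assms(1)
  by simp

lemma proj_finprod:
  assumes "comm_group G" "j \<in> I" "finite A" "f \<in> A \<rightarrow> carrier (product_group I (\<lambda>_. G))"
  shows "(finprod (product_group I (\<lambda>_. G)) f A) j = finprod G (\<lambda>a. f a j) A"
proof -
  interpret P: comm_group "product_group I (\<lambda>_. G)" using comm_group_product[OF assms(1)] .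
  interpret G: comm_group G by fact
  show ?thesis
  using assms(3,4)
proof (induction A rule: finite_induct)
  case empty
  then show ?case using assms(2) by simp
next
  case (insert a A)
  have fa: "f a \<in> carrier (product_group I (\<lambda>_. G))" and fA: "f \<in> A \<rightarrow> carrier (product_group I (\<lambda>_. G))"
    using insert by auto
  have "(finprod (product_group I (\<lambda>_. G)) f (insert a A)) j
      = (f a \<otimes>\<^bsub>product_group I (\<lambda>_. G)\<^esub> finprod (product_group I (\<lambda>_. G)) f A) j"
    using insert fa fA by (simp add: P.finprod_insert)
  also have "\<dots> = f a j \<otimes>\<^bsub>G\<^esub> finprod G (\<lambda>a. f a j) A"
    using assms(2) insert.IH[OF fA] by simp
  also have "\<dots> = finprod G (\<lambda>a. f a j) (insert a A)"
    using insert fa fA assms(2) by (subst G.finprod_insert) (auto simp: Pi_iff PiE_iff)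
  finally show ?case .
qed
qed

lemma (in comm_monoid) finprod_single_term:
  assumes "finite A" "a \<in> A" "f \<in> A \<rightarrow> carrier G" "\<And>x. x \<in> A - {a} \<Longrightarrow> f x = \<one>"
  shows "finprod G f A = f a"
proof -
  have "A = insert a (A - {a})" using assms by auto
  moreover have "finprod G f (insert a (A - {a})) = f a \<otimes> finprod G f (A - {a})"
    using assms by (intro finprod_insert) auto
  ultimately have "finprod G f A = f a \<otimes> finprod G f (A - {a})" by simp
  also have "finprod G f (A - {a}) = \<one>" using assms by (intro finprod_one_eqI) auto
  finally show ?thesis using assms by (simp add: Pi_iff)
qed

lemma single_pow:
  assumes "comm_group G" "S \<subseteq> carrier G" "finite S" "completely_splits G M 1 S"
    "x \<in> carrier G"
  shows "x = \<one>\<^bsub>G\<^esub> \<or> (\<exists>s\<in>S. \<exists>m\<in>M. s \<noteq> \<one>\<^bsub>G\<^esub> \<and> x = s [^]\<^bsub>G\<^esub> m)"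
proof -
  interpret G: comm_group G by fact
  obtain e where e: "\<forall>s\<in>S. e s \<in> M \<union> {0}" "card {s\<in>S. e s \<noteq> 0} \<le> 1"
    "x = finprod G (\<lambda>s. s [^]\<^bsub>G\<^esub> e s) S"
    using assms(4,5) unfolding completely_splits_def by blast
  have fin: "finite {s\<in>S. e s \<noteq> 0}" using assms(3) by auto
  have cl: "(\<lambda>s. s [^]\<^bsub>G\<^esub> e s) \<in> S \<rightarrow> carrier G" using assms(2) by auto
  show ?thesis
  proof (cases "{s\<in>S. e s \<noteq> 0} = {}")
    case True
    then have "x = \<one>\<^bsub>G\<^esub>" using e(3) by (auto intro!: G.finprod_one_eqI)
    then show ?thesis by simp
  next
    case False
    then obtain s0 where s0: "{s\<in>S. e s \<noteq> 0} = {s0}"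
      using e(2) fin by (metis (no_types, lifting) One_nat_def card_1_singletonE card_0_eq le_Suc_eq le_zero_eq)
    have "x = s0 [^]\<^bsub>G\<^esub> e s0"
      unfolding e(3) using s0 assms(3) cl
      by (intro G.finprod_single_term) auto
    moreover have "s0 \<in> S" "e s0 \<in> M" using s0 e(1) by auto
    ultimately show ?thesis
      by (cases "s0 = \<one>\<^bsub>G\<^esub>") auto
  qed
qed

theorem theorem16:
  fixes G :: "('a, 'b) monoid_scheme" and M :: "int set" and S :: "'a set" and t :: nat
  assumes "comm_group G" and "finite (carrier G)"
    and "finite M" and "0 \<notin> M"
    and "S \<subseteq> carrier G"
    and "completely_splits G M 1 S"
    and "t > 0"
  shows "completely_splits (power_group G t) M t (spread_set G t S)"
proof -
  interpret G: comm_group G by fact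
  define I where "I = {..<t}"
  define P where "P = product_group I (\<lambda>_. G)"
  define T where "T = spread_set G t S"
  define \<delta> where "\<delta> i s = (\<lambda>j\<in>I. if j = i then s else \<one>\<^bsub>G\<^esub>)" for i s
  have PG: "power_group G t = P" unfolding P_def I_def power_group_def by simp
  interpret P: comm_group P unfolding P_def by (rule comm_group_product[OF assms(1)])
  have finS: "finite S" using assms(2,5) finite_subset by blast
  have T_eq: "T = (\<lambda>(i,s). \<delta> i s) ` (I \<times> S)"
    unfolding T_def spread_set_def \<delta>_def I_def by auto
  have finT: "finite T" unfolding T_eq using finS by (simp add: I_def)
  have TP: "T \<subseteq> carrier P" unfolding T_eq P_def \<delta>_def using assms(5) by auto
  show ?thesis
    unfolding completely_splits_def PG T_def[symmetric]
  proof
    fix g assume g: "g \<in> carrier P"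
    have gi: "g i \<in> carrier G" if "i \<in> I" for i using g that unfolding P_def by auto
    define J where "J = {i\<in>I. g i \<noteq> \<one>\<^bsub>G\<^esub>}"
    have "\<forall>i\<in>J. \<exists>s m. s \<in> S \<and> m \<in> M \<and> s \<noteq> \<one>\<^bsub>G\<^esub> \<and> g i = s [^]\<^bsub>G\<^esub> m"
      using single_pow[OF assms(1,5) finS assms(6) gi] unfolding J_def by blast
    then obtain sf mf where sm: "\<And>i. i \<in> J \<Longrightarrow> sf i \<in> S \<and> mf i \<in> M \<and> sf i \<noteq> \<one>\<^bsub>G\<^esub> \<and> g i = sf i [^]\<^bsub>G\<^esub> mf i"
      by metis
    define d where "d i = \<delta> i (sf i)" for i
    have dJ: "d i \<in> T" if "i \<in> J" for i
      unfolding T_eq d_def using sm[OF that] that unfolding J_def by auto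
    have dval: "d i j = (if j = i then sf i else \<one>\<^bsub>G\<^esub>)" if "j \<in> I" for i j
      unfolding d_def \<delta>_def using that by simp
    have inj: "inj_on d J"
    proof
      fix i i' assume "i \<in> J" "i' \<in> J" "d i = d i'"
      then have "d i i = d i' i" by simp
      then show "i = i'" using \<open>i \<in> J\<close> sm[OF \<open>i \<in> J\<close>] dval unfolding J_def
        by (auto split: if_splits)
    qed
    define e where "e v = (if v \<in> d ` J then mf (inv_into J d v) else 0)" for v
    have e_d: "e (d i) = mf i" if "i \<in> J" for i
      unfolding e_def using inj that by simp
    have e_nz: "\<exists>i\<in>J. v = d i" if "e v \<noteq> 0" for v
      using that unfolding e_def by (auto split: if_splits)
    have finJ: "finite J" unfolding J_def I_def by simp
    show "\<exists>e. (\<forall>s\<in>T. e s \<in> M \<union> {0}) \<and> card {s \<in> T. e s \<noteq> 0} \<le> t \<and>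
          g = finprod P (\<lambda>s. s [^]\<^bsub>P\<^esub> e s) T"
    proof (intro exI conjI)
      show "\<forall>s\<in>T. e s \<in> M \<union> {0}"
        unfolding e_def using sm inj by (auto simp: inv_into_into)
      have "card {s \<in> T. e s \<noteq> 0} \<le> card (d ` J)"
        using e_nz finJ by (intro card_mono) auto
      also have "\<dots> \<le> card J" by (rule card_image_le[OF finJ])
      also have "\<dots> \<le> card I" unfolding J_def I_def by (intro card_mono) auto
      finally show "card {s \<in> T. e s \<noteq> 0} \<le> t" unfolding I_def by simp
      have cl: "(\<lambda>s. s [^]\<^bsub>P\<^esub> e s) \<in> T \<rightarrow> carrier P" using TP by auto
      have RP: "finprod P (\<lambda>s. s [^]\<^bsub>P\<^esub> e s) T \<in> carrier P" using cl by simp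
      show "g = finprod P (\<lambda>s. s [^]\<^bsub>P\<^esub> e s) T"
      proof (rule extensionalityI[of _ I])
        show "g \<in> extensional I" using g unfolding P_def by (simp add: PiE_iff)
        show "finprod P (\<lambda>s. s [^]\<^bsub>P\<^esub> e s) T \<in> extensional I"
          using RP unfolding P_def by (simp add: PiE_iff)
        fix j assume j: "j \<in> I"
        have "finprod P (\<lambda>s. s [^]\<^bsub>P\<^esub> e s) T j = finprod G (\<lambda>v. v j [^]\<^bsub>G\<^esub> e v) T"
          using proj_finprod[OF assms(1) j finT cl[unfolded P_def]]
            proj_pow[OF G.is_group j] TP j unfolding P_def
          by (auto intro!: G.finprod_cong' simp: subset_iff PiE_iff)
        also have "\<dots> = g j"
        proof (cases "j \<in> J")
          case True
          have "finprod G (\<lambda>v. v j [^]\<^bsub>G\<^esub> e v) T = d j j [^]\<^bsub>G\<^esub> e (d j)"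
          proof (rule G.finprod_single_term[OF finT dJ[OF True]])
            show "(\<lambda>v. v j [^]\<^bsub>G\<^esub> e v) \<in> T \<rightarrow> carrier G"
              using TP j unfolding P_def by auto
            fix v assume v: "v \<in> T - {d j}"
            show "v j [^]\<^bsub>G\<^esub> e v = \<one>\<^bsub>G\<^esub>"
            proof (cases "e v = 0")
              case False
              then obtain i where i: "i \<in> J" "v = d i" using e_nz by blast
              then have "i \<noteq> j" using v by auto
              then show ?thesis using i dval[OF j] by simp
            qed simp
          qed
          then show ?thesis using True sm[OF True] e_d[OF True] dval[OF j] by simp
        next
          case False
          have "finprod G (\<lambda>v. v j [^]\<^bsub>G\<^esub> e v) T = \<one>\<^bsub>G\<^esub>"
          proof (rule G.finprod_one_eqI)
            fix v assume v: "v \<in> T"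
            show "v j [^]\<^bsub>G\<^esub> e v = \<one>\<^bsub>G\<^esub>"
            proof (cases "e v = 0")
              case False
              then obtain i where i: "i \<in> J" "v = d i" using e_nz by blast
              then have "i \<noteq> j" using \<open>j \<notin> J\<close> by auto
              then show ?thesis using i dval[OF j] by simp
            qed simp
          qed
          then show ?thesis using False j unfolding J_def by simp
        qed
        finally show "g j = finprod P (\<lambda>s. s [^]\<^bsub>P\<^esub> e s) T j" by simp
      qed
    qed
  qed
qed

end
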